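(* Let $q$ be a prime power and $n=q^4-1$. (i) If $0\le a_2<q-1$, $0\le a_3<q$ and $a_2+a_3\ge q-1$, then the interlude $[(a_2,a_3,a_2,a_3),(a_2+1,a_3,a_2+1,a_3)]_M$ contains exactly $q^2-qa_3-a_2-1$ minimal representatives of SR-asymmetric cosets of cardinality $2$. (ii) If $0\le a_3\le q-2$, then the interlude $[(q-1,a_3,q-1,a_3),(0,a_3+1,0,a_3+1)]_M$ contains exactly $q^2-qa_3-(q-1)-1$ minimal representatives of SR-asymmetric cosets of cardinality $2$. Moreover, in both cases every cyclotomic coset generated by an element of the interlude is an SR-asymmetric coset.
   Context: Identify $\mathbb{Z}_n$ with $\{0,\ldots,n-1\}$, all arithmetic modulo $n$. The $q$-adic 4-tuple $(a_0,a_1,a_2,a_3)$ denotes $a_0+a_1q+a_2q^2+a_3q^3$ with $0\le a_i<q$. The cyclotomic coset of $x$ with respect to $q^2$ is $I_x=\{x,\,q^2x\bmod n\}$; its minimal representative is its least element. The (Hermitian) reciprocal coset of $I_x$ is $I_{n-qx}$. $I_x$ is symmetric if $I_{n-qx}=I_x$ and asymmetric otherwise; for an asymmetric pair with minimal representatives $x<y$, $I_x$ is FR-asymmetric and $I_y$ is SR-asymmetric. For $0\le a<q-1$, $0\le b<q$, the interlude $[(a,b,a,b),(a+1,b,a+1,b)]_M$ is the set of integers $x$ with $(a,b,a,b)<x<(a+1,b,a+1,b)$ that are minimal representatives of a coset of cardinality $2$; for $0\le b\le q-2$, $[(q-1,b,q-1,b),(0,b+1,0,b+1)]_M$ is the set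 of integers $x$ with $(q-1,b,q-1,b)<x<(0,b+1,0,b+1)$ and $x<q^2x\bmod n$. *)

theory Defs
  imports "HOL-Computational_Algebra.Primes"
begin

definition prime_power :: "nat \<Rightarrow> bool" where
  "prime_power q \<longleftrightarrow> (\<exists>p k. prime p \<and> k \<ge> 1 \<and> q = p ^ k)"

definition qadic :: "nat \<Rightarrow> nat \<Rightarrow> nat \<Rightarrow> nat \<Rightarrow> nat \<Rightarrow> nat" where
  "qadic q a0 a1 a2 a3 = a0 + a1 * q + a2 * q^2 + a3 * q^3"

definition cyc_coset :: "nat \<Rightarrow> nat \<Rightarrow> nat \<Rightarrow> nat set" where
  "cyc_coset n q x = {x, (q^2 * x) mod n}"

definition recip_gen :: "nat \<Rightarrow> nat \<Rightarrow> nat \<Rightarrow> nat" where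
  "recip_gen n q x = (n - (q * x) mod n) mod n"

definition symmetric_coset :: "nat \<Rightarrow> nat \<Rightarrow> nat \<Rightarrow> bool" where
  "symmetric_coset n q x \<longleftrightarrow> cyc_coset n q (recip_gen n q x) = cyc_coset n q x"

definition SR_asymmetric :: "nat \<Rightarrow> nat \<Rightarrow> nat \<Rightarrow> bool" where
  "SR_asymmetric n q x \<longleftrightarrow> \<not> symmetric_coset n q x \<and>
     Min (cyc_coset n q (recip_gen n q x)) < Min (cyc_coset n q x)"

definition interlude1 :: "nat \<Rightarrow> nat \<Rightarrow> nat \<Rightarrow> nat \<Rightarrow> nat set" where
  "interlude1 n q a b = {x. qadic q a b a b < x \<and> x < qadic q (a+1) b (a+1) b \<and>
      Min (cyc_coset n q x) = x \<and> card (cyc_coset n q x) = 2}"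

definition interlude2 :: "nat \<Rightarrow> nat \<Rightarrow> nat \<Rightarrow> nat set" where
  "interlude2 n q b = {x. qadic q (q-1) b (q-1) b < x \<and> x < qadic q 0 (b+1) 0 (b+1) \<and>
      x < (q^2 * x) mod n}"

end

theory Submission
  imports Defs
begin

lemma swap_mod:
  fixes Q n L H :: nat
  assumes "n = Q*Q - 1" "Q \<ge> 1" "H + Q*L < n"
  shows "(Q*(L + Q*H)) mod n = H + Q*L"
proof -
  have "Q*Q*H = H + n*H" using assms(1,2)
    by (simp add: algebra_simps)
  hence "Q*(L + Q*H) = (H + Q*L) + n*H" by (simp add: algebra_simps)
  thus ?thesis using assms(3) by simp
qed

lemma nQ: "n = Q*Q - 1 \<Longrightarrow> (Q::nat) \<ge> 1 \<Longrightarrow> (Q - 1) + Q*(Q-1) = n"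
  by (simp add: algebra_simps diff_mult_distrib2)

lemma lt_swap: "(L::nat) < H \<Longrightarrow> Q \<ge> 2 \<Longrightarrow> Q*L + H < Q*H + L"
proof -
  assume a: "L < H" "Q \<ge> 2"
  obtain k where "H = L + Suc k" using a less_imp_Suc_add by fastforce
  moreover have "Q*(Suc k) \<ge> 2*(Suc k)" using a by (intro mult_le_mono1) simp
  ultimately show ?thesis by (simp add: algebra_simps)
qed

lemma le_swap: "(L::nat) \<le> H \<Longrightarrow> Q*L + H \<le> Q*H + L" if "Q \<ge> 1"
proof -
  assume a: "L \<le> H"
  obtain d where "H = L + d" using a le_Suc_ex by blast
  moreover have "Q*d \<ge> d" using that by simp
  ultimately show ?thesis by (simp add: algebra_simps)
qed

lemma charS:
  fixes Q n H0 :: nat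
  assumes "n = Q*Q - 1" "Q \<ge> 2" "H0 + 1 < Q"
  shows "{x. H0 + Q*H0 < x \<and> x < (H0+1) + Q*(H0+1) \<and> x < (Q*x) mod n}
         = (\<lambda>L. L + Q*H0) ` {H0<..<Q}" (is "?S = ?T")
proof
  have nn: "(Q - 1) + Q*(Q-1) = n" using nQ assms by simp
  show "?S \<subseteq> ?T"
  proof
    fix x assume "x \<in> ?S"
    hence x1: "H0 + Q*H0 < x" and x2: "x < (H0+1) + Q*(H0+1)" and x3: "x < (Q*x) mod n" by auto
    define L where "L = x mod Q"
    define H where "H = x div Q"
    have xe: "x = L + Q*H" unfolding L_def H_def by simp
    have LQ: "L < Q" unfolding L_def using assms(2) by simp
    have xb: "(H0+1) + Q*(H0+1) \<le> (Q-1) + Q*(Q-1)" using assms(3)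
        by (intro add_mono mult_le_mono) auto
    have xn: "x < n" using x2 xb nn by linarith
    have HQ: "H < Q"
    proof (rule ccontr)
      assume "\<not> H < Q"
      hence "Q*Q \<le> Q*H" by simp
      moreover have "Q + Q*(Q-1) = Q*Q" using assms(2)
        by (simp add: diff_mult_distrib2)
      ultimately show False using x2 xb xe by linarith
    qed
    have nb: "H + Q*L < n"
    proof -
      have h1: "H \<le> Q - 1" "Q*L \<le> Q*(Q-1)" using HQ LQ by auto
      have "H + Q*L \<noteq> n"
      proof
        assume "H + Q*L = n"
        hence "H = Q - 1" "Q*L = Q*(Q-1)" using h1 nn by linarith+
        hence "L = Q - 1" "H = Q - 1" using assms(2) by simp_all
        hence "x = n" using xe nn by simp
        thus False using xn by simp
      qed
      thus ?thesis using h1 nn by linarith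
    qed
    have mq: "(Q*x) mod n = H + Q*L" unfolding xe by (rule swap_mod[OF assms(1) _ nb]) (use assms(2) in simp)
    have HL: "H < L"
    proof (rule ccontr)
      assume "\<not> H < L"
      hence "L \<le> H" by simp
      hence "Q*L + H \<le> Q*H + L" using le_swap[of Q L H] assms(2) by simp
      thus False using x3 xe mq by linarith
    qed
    have HH0: "H = H0"
    proof (rule ccontr)
      assume "H \<noteq> H0"
      then consider "H < H0" | "H0 + 1 \<le> H" by linarith
      thus False
      proof cases
        case 1
        hence "Q*(H+1) \<le> Q*H0" by (intro mult_le_mono2) simp
        hence "Q + Q*H \<le> Q*H0" by simp
        thus False using x1 xe LQ by linarith
      next
        case 2
        hence "Q*(H0+1) \<le> Q*H" by (intro mult_le_mono2) simp
        thus False using x2 xe HL 2 by linarith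
      qed
    qed
    show "x \<in> ?T" using xe HH0 HL LQ by auto
  qed
next
  have nn: "(Q - 1) + Q*(Q-1) = n" using nQ assms by simp
  show "?T \<subseteq> ?S"
  proof
    fix x assume "x \<in> ?T"
    then obtain L where L: "H0 < L" "L < Q" and xe: "x = L + Q*H0" by auto
    have "Q*L \<le> Q*(Q-1)" using L by simp
    hence nb: "H0 + Q*L < n" using assms(3) nn by linarith
    have "(Q*x) mod n = H0 + Q*L" unfolding xe by (rule swap_mod[OF assms(1) _ nb]) (use assms(2) in simp)
    moreover have "Q*H0 + L < Q*L + H0" using lt_swap[OF L(1) assms(2)] by simp
    ultimately have c3: "x < (Q*x) mod n" using xe by linarith
    have c1: "H0 + Q*H0 < x" using xe L by linarith
    have c2: "x < (H0+1) + Q*(H0+1)" using xe L by (simp add: distrib_left)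
    show "x \<in> ?S" using c1 c2 c3 by blast
  qed
qed

lemma cardS:
  fixes Q H0 :: nat
  shows "card ((\<lambda>L. L + Q*H0) ` {H0<..<Q}) = Q - 1 - H0"
proof -
  have "inj_on (\<lambda>L. L + Q*H0) {H0<..<Q}" by (rule inj_onI) simp
  hence "card ((\<lambda>L. L + Q*H0) ` {H0<..<Q}) = card {H0<..<Q}" by (rule card_image)
  thus ?thesis by simp
qed


lemma key_id:
  fixes Q A3 L :: int
  shows "L + Q^2*(Q-1-A3) + Q^3*A3 + A3 + Q*L + (Q-1-A3)*Q^3 - (Q^4 - 1)
     = (L - ((Q-1-A3) + A3*Q + 1)) + (Q*L - Q*((Q-1-A3) + A3*Q + 1)) + Q + 1"
  by (simp add: algebra_simps power2_eq_square power3_eq_cube power4_eq_xxxx)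

lemma sr_core:
  fixes q n a2 a3 L :: nat
  assumes q2: "q \<ge> 2" and nd: "n = q^4 - 1" and a2q: "a2 < q" and a3q: "a3 < q"
    and s: "q - 1 \<le> a2 + a3" and Lb: "a2 + a3*q < L" and LQ: "L < q^2"
    and hb: "a2 + a3*q + 1 < q^2"
  shows "n - (q * (L + q^2*(a2 + a3*q))) mod n < L + q^2*(a2 + a3*q)
         \<and> 0 < (q * (L + q^2*(a2 + a3*q))) mod n"
proof -
  define x where "x = L + q^2*(a2 + a3*q)"
  define y where "y = a3 + q*L + a2*q^3"
  have q4: "q^4 = n + 1" using nd q2 by simp
  have qx: "q*x = y + n*a3"
  proof -
    have "q*x = q*L + a2*q^3 + a3*q^4" unfolding x_def
      by (simp add: algebra_simps power2_eq_square power3_eq_cube power4_eq_xxxx)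
    thus ?thesis unfolding y_def q4 by (simp add: algebra_simps)
  qed
  have f1: "q*L + q \<le> q^3"
  proof -
    have "q*(L+1) \<le> q*q^2" using LQ by (intro mult_le_mono2) simp
    thus ?thesis by (simp add: algebra_simps power2_eq_square power3_eq_cube)
  qed
  have f2: "a2*q^3 + q^3 \<le> q^4"
  proof -
    have "(a2+1)*q^3 \<le> q*q^3" using a2q by (intro mult_le_mono1) simp
    thus ?thesis by (simp add: algebra_simps power3_eq_cube power4_eq_xxxx)
  qed
  have yn: "y < n"
  proof -
    have le: "y + 1 \<le> q^4" using f1 f2 a3q unfolding y_def by linarith
    have "y + 1 \<noteq> q^4"
    proof
      assume "y + 1 = q^4"
      hence "a3 + 1 = q" "a2*q^3 + q^3 = q^4" using f1 f2 a3q unfolding y_def by linarith+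
      hence e: "(a2+1)*q^3 = q*q^3" by (simp add: algebra_simps power3_eq_cube power4_eq_xxxx)
      have "q^3 > 0" using q2 by simp
      hence "a2 + 1 = q" using e mult_right_cancel[of "q^3" "a2+1" q] by simp
      hence "a2 + a3*q + 1 = q + a3*q" by simp
      also have "\<dots> = (a3+1)*q" by simp
      also have "\<dots> = q^2" using \<open>a3 + 1 = q\<close> by (simp add: power2_eq_square)
      finally show False using hb by simp
    qed
    thus ?thesis using le q4 by linarith
  qed
  have ymod: "(q*x) mod n = y" using qx yn by simp
  have ypos: "0 < y"
  proof -
    have "q*1 \<le> q*L" using Lb by (intro mult_le_mono2) simp
    thus ?thesis using q2 unfolding y_def by simp
  qed
  have main: "n < x + y"
  proof (cases "q \<le> a2 + a3")
    case True
    have "q*q^3 \<le> (a2+a3)*q^3" using True by (intro mult_le_mono1)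
    hence "q^4 \<le> a2*q^3 + a3*q^3" by (simp add: algebra_simps power3_eq_cube power4_eq_xxxx)
    moreover have "a3*q^3 = q^2*(a3*q)" by (simp add: power2_eq_square power3_eq_cube)
    ultimately show ?thesis unfolding x_def y_def using q4 by (simp add: algebra_simps)
  next
    case False
    hence sq: "a2 + a3 + 1 = q" using s by linarith
    hence A2: "int a2 = int q - 1 - int a3" by linarith
    have m0: "int (a2 + a3*q) < int L" using Lb by (simp only: of_nat_less_iff)
    hence m0': "int a2 + int a3 * int q < int L" by (simp only: of_nat_add of_nat_mult)
    hence m2: "int a2 + int a3 * int q + 1 \<le> int L" by linarith
    have m1: "int q * (int a2 + int a3 * int q + 1) \<le> int q * int L"
      using m2 by (intro mult_left_mono) simp_all
    have "int q ^ 4 = int (q^4)" by (simp only: of_nat_power)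
    also have "\<dots> = int n + 1" unfolding q4 by (simp only: of_nat_add of_nat_1)
    finally have ni: "int n = int q ^ 4 - 1" by linarith
    have "int x + int y - int n
       = int L + (int q)^2*(int q-1-int a3) + (int q)^3*int a3 + int a3 + int q*int L
         + (int q-1-int a3)*(int q)^3 - ((int q)^4 - 1)"
      unfolding x_def y_def ni A2[symmetric] by (simp add: algebra_simps power2_eq_square power3_eq_cube)
    also have "\<dots> = (int L - ((int q-1-int a3) + int a3*int q + 1))
        + (int q*int L - int q*((int q-1-int a3) + int a3*int q + 1)) + int q + 1"
      by (rule key_id)
    finally have "int x + int y - int n = (int L - (int a2 + int a3*int q + 1))
        + (int q*int L - int q*(int a2 + int a3*int q + 1)) + int q + 1"
      unfolding A2 .
    hence "int n < int x + int y" using m1 m2 by linarith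
    thus ?thesis by linarith
  qed
  show ?thesis using main ymod ypos yn unfolding x_def[symmetric] by linarith
qed


lemma min_coset: "x < (q^2*x) mod n \<Longrightarrow> Min (cyc_coset n q x) = x"
  by (simp add: cyc_coset_def)

lemma qadic_sym: "qadic q a b a b = (a + b*q) + q^2*(a + b*q)"
  unfolding qadic_def by (simp add: algebra_simps power2_eq_square power3_eq_cube)

lemma sr_final:
  fixes q n a2 a3 L x :: nat
  assumes q2: "q \<ge> 2" and nd: "n = q^4 - 1" and a2q: "a2 < q" and a3q: "a3 < q"
    and s: "q - 1 \<le> a2 + a3" and Lb: "a2 + a3*q < L" and LQ: "L < q^2"
    and hb: "a2 + a3*q + 1 < q^2" and xe: "x = L + q^2*(a2 + a3*q)"
    and xm: "x < (q^2*x) mod n"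
  shows "SR_asymmetric n q x"
proof -
  have c: "n - (q*x) mod n < x" "0 < (q*x) mod n"
    using sr_core[OF q2 nd a2q a3q s Lb LQ hb] xe by auto
  have "2^4 \<le> q^4" by (rule power_mono[OF q2]) simp
  hence "16 \<le> q^4" by simp
  hence "n > 0" using nd by linarith
  hence "(q*x) mod n < n" by simp
  hence r: "recip_gen n q x = n - (q*x) mod n" unfolding recip_gen_def using c(2) by simp
  have "Min (cyc_coset n q (recip_gen n q x)) \<le> recip_gen n q x"
    unfolding cyc_coset_def by simp
  hence lt: "Min (cyc_coset n q (recip_gen n q x)) < Min (cyc_coset n q x)"
    using min_coset[OF xm] r c(1) by linarith
  hence "\<not> symmetric_coset n q x" unfolding symmetric_coset_def by auto
  thus ?thesis unfolding SR_asymmetric_def using lt by simp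
qed

lemma gen_case:
  fixes q n a2 a3 :: nat
  assumes q2: "q \<ge> 2" and nd: "n = q^4 - 1" and a2q: "a2 < q" and a3q: "a3 < q"
    and s: "q - 1 \<le> a2 + a3" and hb: "a2 + a3*q + 1 < q^2"
    and I: "I = {x. (a2 + a3*q) + q^2*(a2 + a3*q) < x \<and> x < (a2 + a3*q+1) + q^2*(a2 + a3*q+1)
                 \<and> x < (q^2*x) mod n}"
  shows "int (card {x \<in> I. SR_asymmetric n q x}) = int q ^ 2 - int q * int a3 - int a2 - 1
         \<and> (\<forall>x \<in> I. SR_asymmetric n q x)"
proof -
  have nQ: "n = q^2*q^2 - 1" using nd by (simp add: power2_eq_square power4_eq_xxxx)
  have "2*1 \<le> q*q" using q2 by (intro mult_le_mono) auto
  hence Q2: "q^2 \<ge> 2" by (simp add: power2_eq_square)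
  have IS: "I = (\<lambda>L. L + q^2*(a2 + a3*q)) ` {a2 + a3*q<..<q^2}"
    unfolding I using charS[OF nQ Q2 hb] by simp
  have all: "\<forall>x \<in> I. SR_asymmetric n q x"
  proof
    fix x assume xI: "x \<in> I"
    then obtain L where L: "a2 + a3*q < L" "L < q^2" and xe: "x = L + q^2*(a2 + a3*q)"
      using IS by auto
    have xm: "x < (q^2*x) mod n" using xI I by simp
    show "SR_asymmetric n q x" using sr_final[OF q2 nd a2q a3q s L hb xe xm] .
  qed
  have "{x \<in> I. SR_asymmetric n q x} = I" using all by auto
  hence "card {x \<in> I. SR_asymmetric n q x} = q^2 - 1 - (a2 + a3*q)"
    using IS cardS by simp
  hence "int (card {x \<in> I. SR_asymmetric n q x}) = int (q^2) - 1 - (int a2 + int a3 * int q)"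
    using hb by (simp add: of_nat_diff)
  hence "int (card {x \<in> I. SR_asymmetric n q x}) = int q ^ 2 - int q * int a3 - int a2 - 1"
    by (simp add: algebra_simps)
  thus ?thesis using all by simp
qed

theorem mainTheorem16:
  fixes q n :: nat
  assumes "prime_power q"
    and "n = q ^ 4 - 1"
  shows "(\<forall>a2 a3. a2 < q - 1 \<and> a3 < q \<and> a2 + a3 \<ge> q - 1 \<longrightarrow>
            int (card {x \<in> interlude1 n q a2 a3. SR_asymmetric n q x})
              = int q ^ 2 - int q * int a3 - int a2 - 1
            \<and> (\<forall>x \<in> interlude1 n q a2 a3. SR_asymmetric n q x))
       \<and> (\<forall>a3. a3 \<le> q - 2 \<longrightarrow>
            int (card {x \<in> interlude2 n q a3. SR_asymmetric n q x})
              = int q ^ 2 - int q * int a3 - (int q - 1) - 1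
            \<and> (\<forall>x \<in> interlude2 n q a3. SR_asymmetric n q x))"
proof -
  obtain p k where pk: "prime p" "k \<ge> 1" "q = p^k" using assms(1) unfolding prime_power_def by blast
  have p1: "1 \<le> p" using pk(1) prime_gt_1_nat[of p] by linarith
  have "p^1 \<le> p^k" by (rule power_increasing[OF pk(2) p1])
  hence "p \<le> p^k" by (simp only: power_one_right)
  hence q2: "q \<ge> 2" using pk(3) prime_ge_2_nat[OF pk(1)] by linarith
  have P1: "int (card {x \<in> interlude1 n q a2 a3. SR_asymmetric n q x})
              = int q ^ 2 - int q * int a3 - int a2 - 1
            \<and> (\<forall>x \<in> interlude1 n q a2 a3. SR_asymmetric n q x)"
    if h: "a2 < q - 1" "a3 < q" "a2 + a3 \<ge> q - 1" for a2 a3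
  proof -
    have "a3*q \<le> (q-1)*q" using h by (intro mult_le_mono1) simp
    moreover have "(q-1)*q + q = q^2" using q2 by (simp add: power2_eq_square diff_mult_distrib)
    ultimately have hb: "a2 + a3*q + 1 < q^2" using h by linarith
    have I: "interlude1 n q a2 a3 = {x. (a2 + a3*q) + q^2*(a2 + a3*q) < x \<and> x < (a2 + a3*q+1) + q^2*(a2 + a3*q+1)
                 \<and> x < (q^2*x) mod n}"
    proof -
      have "qadic q (a2+1) a3 (a2+1) a3 = (a2 + a3*q+1) + q^2*(a2 + a3*q+1)"
        using qadic_sym[of q "a2+1" a3] by simp
      moreover have "(Min (cyc_coset n q x) = x \<and> card (cyc_coset n q x) = 2) = (x < (q^2*x) mod n)" for x
        unfolding cyc_coset_def by (cases "x = (q^2*x) mod n") (auto simp: min_def)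
      ultimately show ?thesis unfolding interlude1_def qadic_sym by simp
    qed
    show ?thesis by (rule gen_case[OF q2 assms(2) _ h(2) h(3) hb I]) (use h in linarith)
  qed
  have P2: "int (card {x \<in> interlude2 n q a3. SR_asymmetric n q x})
              = int q ^ 2 - int q * int a3 - (int q - 1) - 1
            \<and> (\<forall>x \<in> interlude2 n q a3. SR_asymmetric n q x)"
    if h: "a3 \<le> q - 2" for a3
  proof -
    have e: "(q-1) + a3*q + 1 = (a3+1)*q" using q2 by simp
    have "(a3+1)*q \<le> (q-1)*q" using h q2 by (intro mult_le_mono1) simp
    moreover have "(q-1)*q + q = q^2" using q2 by (simp add: power2_eq_square diff_mult_distrib)
    ultimately have "(a3+1)*q < q^2" using q2 by linarith
    hence hb: "(q-1) + a3*q + 1 < q^2" by (simp only: e)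
    have I: "interlude2 n q a3 = {x. ((q-1) + a3*q) + q^2*((q-1) + a3*q) < x \<and> x < ((q-1) + a3*q+1) + q^2*((q-1) + a3*q+1)
                 \<and> x < (q^2*x) mod n}"
    proof -
      have "qadic q 0 (a3+1) 0 (a3+1) = (a3+1)*q + q^2*((a3+1)*q)"
        unfolding qadic_def by (simp add: algebra_simps power2_eq_square power3_eq_cube)
      thus ?thesis unfolding interlude2_def qadic_sym e by simp
    qed
    have r: "int q ^ 2 - int q * int a3 - int (q-1) - 1 = int q ^ 2 - int q * int a3 - (int q - 1) - 1"
      using q2 by simp
    have a3q: "a3 < q" using h q2 by linarith
    show ?thesis using gen_case[OF q2 assms(2) _ a3q _ hb I] r q2 by simp
  qed
  show ?thesis using P1 P2 by blast
qed

end
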